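(* In any execution of $\mathcal{U}$, for every operation $o$: if $h(o) = (t(o), x)$ for some $x$ at time $T$, and $h(o) = (t, y)$ for some $y$ with $t \neq t(o)$ at a time $T' > T$, then there is a time $T^* < T'$ at which $o$ is done.
   Context: Model: an asynchronous shared-memory system with possibly infinitely many processes, any of which may crash, communicating via atomic shared objects. A fetch-and-increment (F\&I) object stores an integer; F\&I$(C)$ atomically returns the current value and increments it. A generalized-compare-and-swap (GCAS) object $O$ stores a value and supports Read$(O)$ and GCAS$(c, O, v_1, v_2)$, which atomically does: if $c(\text{current value of } O, v_1)$ holds then set $O := v_2$ and return true, else return false. Tuples are compared componentwise for $=$; GCAS$(>, A, (t,-,-), v)$ succeeds iff the time field of $A$ is strictly greater than $t$. Implemented type $\mathcal{T} = (OP, RES, Q, \delta)$ with initial state $s_0$; a procedure $apply_{\mathcal{T}}(o,s)$ returns some $(s',r)$ with $(s,o,s',r)\in\delta$. $NULL$ is a value different from every response of $\mathcal{T}$, and $NOOP$ is a name different from every operation of $\mathcal{T}$. Algorithm $\mathcal{U}$: each process $p$ owns a GCAS object $H_p$ with fields $(time, response)$. Shared objects: F\&I object $C$, initially $1$; GCAS object $A$ with fields $(time, op, ptr)$, initially $(0, NOOP, h(NOOP))$, where $h(NOOP)$ is a pointer to an immutable location containing $(0,\perp)$; GCAS object $S$ with fields $(time, state, response, ptr)$, initially $(0, s_0, \perp, h(NOOP))$. Process $p$ performs operation $o$ by calling DoOp$(o)$: (1) DoOp$(o)$ invoked; (2) $t := $ F\&I$(C)$; (3) $H_p := (t, NULL)$;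 (4) while $H_p = (t, NULL)$ do: (5) $(t^*, s^*, r^*, roptr^* ) := S$; (6) GCAS$(=, *roptr^*, (t^*, NULL), (t^*, r^* ))$; (7) GCAS$(>, A, (t,-,-), (t, o, \&H_p))$; (8) $(t', o', roptr') := A$; (9) $(\hat t, \hat r) := *roptr'$; (10) if $(\hat t,\hat r) = (t', NULL)$ then (11) $(s', r') := apply_{\mathcal{T}}(o', s^* )$; (12) GCAS$(=, S, (t^*,s^*,r^*,roptr^* ), (t', s', r', roptr'))$; (13) else GCAS$(=, A, (t', o', roptr'), (t, o, \&H_p))$; end while; (14) return $H_p.response$. Notation: an "operation" $o$ means one invocation of DoOp$(o)$. $p(o)$ is the process executing it; $t(o)$ is the value returned by its F\&I at line 2, or $\infty$ if line 2 has not been executed; $h(o)$ is $H_{p(o)}$. For $NOOP$: $t(NOOP)=0$ and $h(NOOP)$ is the immutable location containing $(0,\perp)$. Operation $o$ is complete at time $T$ if $p(o)$ executed line 14 in DoOp$(o)$ at some time $\le T$. Operation $o$ is done at time $T$ if at some time $T'\le T$, $h(o) = (t(o), r)$ with $r \neq NULL$. *)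

theory Defs
  imports Main
begin

text \<open>Processes are elements of an arbitrary (possibly infinite) type 'p.
  Each atomic shared-memory access / local step of the pseudocode is one step.\<close>

datatype 'r resp = Null | Bot | Val 'r

datatype 'op aop = NOOP | Op 'op

text \<open>Pointers: h(NOOP) (an immutable location holding (0,bottom)) or the address of H_q.\<close>
datatype 'p ptr = NoopPtr | HPtr 'p

text \<open>Program counter: Idle = ready to invoke DoOp (line 1); Lk = about to execute line k.\<close>
datatype pcv = Idle | L2 | L3 | L4 | L5 | L6 | L7 | L8 | L9 | L10 | L11 | L12 | L13 | L14

record ('p,'op,'s,'r) loc =
  lo :: 'op
  lt :: nat
  lS :: "nat \<times> 's \<times> 'r resp \<times> 'p ptr"
  lA :: "nat \<times> 'op aop \<times> 'p ptr"
  lH :: "nat \<times> 'r resp"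
  lApp :: "'s \<times> 'r resp"

record ('p,'op,'s,'r) conf =
  Cv :: nat
  Av :: "nat \<times> 'op aop \<times> 'p ptr"
  Sv :: "nat \<times> 's \<times> 'r resp \<times> 'p ptr"
  Hv :: "'p \<Rightarrow> nat \<times> 'r resp"
  pc :: "'p \<Rightarrow> pcv"
  inv :: "'p \<Rightarrow> nat"   \<comment> \<open>number of DoOp invocations started by each process\<close>
  lc :: "'p \<Rightarrow> ('p,'op,'s,'r) loc"

definition deref :: "('p,'op,'s,'r) conf \<Rightarrow> 'p ptr \<Rightarrow> nat \<times> 'r resp" where
  "deref c x = (case x of NoopPtr \<Rightarrow> (0, Bot) | HPtr q \<Rightarrow> Hv c q)"

definition init :: "'s \<Rightarrow> ('p,'op,'s,'r) conf" where
  "init s0 = \<lparr> Cv = 1, Av = (0, NOOP, NoopPtr), Sv = (0, s0, Bot, NoopPtr),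
     Hv = (\<lambda>_. (0, Bot)), pc = (\<lambda>_. Idle), inv = (\<lambda>_. 0), lc = (\<lambda>_. undefined) \<rparr>"

text \<open>One atomic step of process p.  delta is the transition relation of T,
  as a set of tuples (s, o, s', r).\<close>
definition ustep :: "('s \<times> 'op \<times> 's \<times> 'r) set \<Rightarrow> 'p \<Rightarrow> ('p,'op,'s,'r) conf \<Rightarrow> ('p,'op,'s,'r) conf \<Rightarrow> bool" where
  "ustep \<delta> p c c' = (let l = lc c p; goto = (\<lambda>n. (pc c)(p := n)); setl = (\<lambda>l'. (lc c)(p := l')) in
    case pc c p of
      Idle \<Rightarrow> (\<exists>op. c' = c\<lparr>pc := goto L2, inv := (inv c)(p := Suc (inv c p)), lc := setl (l\<lparr>lo := op\<rparr>)\<rparr>)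
    | L2 \<Rightarrow> c' = c\<lparr>Cv := Suc (Cv c), pc := goto L3, lc := setl (l\<lparr>lt := Cv c\<rparr>)\<rparr>
    | L3 \<Rightarrow> c' = c\<lparr>Hv := (Hv c)(p := (lt l, Null)), pc := goto L4\<rparr>
    | L4 \<Rightarrow> c' = c\<lparr>pc := goto (if Hv c p = (lt l, Null) then L5 else L14)\<rparr>
    | L5 \<Rightarrow> c' = c\<lparr>pc := goto L6, lc := setl (l\<lparr>lS := Sv c\<rparr>)\<rparr>
    | L6 \<Rightarrow> (case lS l of (ts, ss, rs, rp) \<Rightarrow>
              c' = c\<lparr>Hv := (case rp of NoopPtr \<Rightarrow> Hv c
                                 | HPtr q \<Rightarrow> (if Hv c q = (ts, Null) then (Hv c)(q := (ts, rs)) else Hv c)),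
                     pc := goto L7\<rparr>)
    | L7 \<Rightarrow> c' = c\<lparr>Av := (if fst (Av c) > lt l then (lt l, Op (lo l), HPtr p) else Av c), pc := goto L8\<rparr>
    | L8 \<Rightarrow> c' = c\<lparr>pc := goto L9, lc := setl (l\<lparr>lA := Av c\<rparr>)\<rparr>
    | L9 \<Rightarrow> c' = c\<lparr>pc := goto L10, lc := setl (l\<lparr>lH := deref c (snd (snd (lA l)))\<rparr>)\<rparr>
    | L10 \<Rightarrow> c' = c\<lparr>pc := goto (if lH l = (fst (lA l), Null) then L11 else L13)\<rparr>
    | L11 \<Rightarrow> (case fst (snd (lA l)) of
               Op o' \<Rightarrow> (\<exists>s' r'. (fst (snd (lS l)), o', s', r') \<in> \<delta> \<and>
                          c' = c\<lparr>pc := goto L12, lc := setl (l\<lparr>lApp := (s', Val r')\<rparr>)\<rparr>)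
             | NOOP \<Rightarrow> c' = c\<lparr>pc := goto L12, lc := setl (l\<lparr>lApp := (fst (snd (lS l)), Bot)\<rparr>)\<rparr>)
    | L12 \<Rightarrow> c' = c\<lparr>Sv := (if Sv c = lS l
                           then (fst (lA l), fst (lApp l), snd (lApp l), snd (snd (lA l))) else Sv c),
                   pc := goto L4\<rparr>
    | L13 \<Rightarrow> c' = c\<lparr>Av := (if Av c = lA l then (lt l, Op (lo l), HPtr p) else Av c), pc := goto L4\<rparr>
    | L14 \<Rightarrow> c' = c\<lparr>pc := goto Idle\<rparr>)"

text \<open>Crashed processes are simply never scheduled again.\<close>
definition is_exec :: "('s \<times> 'op \<times> 's \<times> 'r) set \<Rightarrow> 's \<Rightarrow> (nat \<Rightarrow> ('p,'op,'s,'r) conf) \<Rightarrow> (nat \<Rightarrow> 'p option) \<Rightarrow> bool" where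
  "is_exec \<delta> s0 E sched =
     (E 0 = init s0 \<and>
      (\<forall>T. case sched T of None \<Rightarrow> E (Suc T) = E T | Some p \<Rightarrow> ustep \<delta> p (E T) (E (Suc T))))"

text \<open>An operation o is identified by (p, k): the k-th invocation of DoOp by process p.
  tOp E sched p k v: the F\&I at line 2 of that invocation returned v, i.e. t(o) = v
  (t(o) is infinite iff there is no such v).\<close>
definition tOp :: "(nat \<Rightarrow> ('p,'op,'s,'r) conf) \<Rightarrow> (nat \<Rightarrow> 'p option) \<Rightarrow> 'p \<Rightarrow> nat \<Rightarrow> nat \<Rightarrow> bool" where
  "tOp E sched p k v = (\<exists>T. sched T = Some p \<and> pc (E T) p = L2 \<and> inv (E T) p = k \<and> Cv (E T) = v)"

definition done_at :: "(nat \<Rightarrow> ('p,'op,'s,'r) conf) \<Rightarrow> (nat \<Rightarrow> 'p option) \<Rightarrow> 'p \<Rightarrow> nat \<Rightarrow> nat \<Rightarrow> bool" where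
  "done_at E sched p k T = (\<exists>v. tOp E sched p k v \<and> (\<exists>T'\<le>T. \<exists>r. Hv (E T') p = (v, r) \<and> r \<noteq> Null))"

end

theory Submission imports Defs begin
lemma step_other:
  assumes "ustep \<delta> q c c'" "q \<noteq> p"
  shows "pc c' p = pc c p \<and> lc c' p = lc c p \<and> fst (Hv c' p) = fst (Hv c p) \<and> Cv c \<le> Cv c'"
  using assms unfolding ustep_def Let_def
  apply (cases "pc c q")
  apply (simp_all split: prod.splits ptr.splits aop.splits)
  apply auto
  done

lemma step_cv:
  assumes "ustep \<delta> q c c'"
  shows "Cv c \<le> Cv c'"
  using assms unfolding ustep_def Let_def
  apply (cases "pc c q")
  apply (simp_all split: prod.splits ptr.splits aop.splits)
  apply auto
  done

lemma step_L2:
  assumes "ustep \<delta> p c c'" "pc c p = L2"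
  shows "pc c' p = L3 \<and> lt (lc c' p) = Cv c \<and> Hv c' p = Hv c p"
  using assms unfolding ustep_def Let_def by simp

lemma step_L3:
  assumes "ustep \<delta> p c c'" "pc c p = L3"
  shows "pc c' p = L4 \<and> lt (lc c' p) = lt (lc c p) \<and> Hv c' p = (lt (lc c p), Null)"
  using assms unfolding ustep_def Let_def by simp

lemma step_L4:
  assumes "ustep \<delta> p c c'" "pc c p = L4"
  shows "lt (lc c' p) = lt (lc c p) \<and> Hv c' p = Hv c p \<and>
     (pc c' p = L5 \<or> (pc c' p = L14 \<and> Hv c p \<noteq> (lt (lc c p), Null)))"
  using assms unfolding ustep_def Let_def by simp

lemma step_mid:
  assumes "ustep \<delta> p c c'" "pc c p \<in> {L5,L6,L7,L8,L9,L10,L11,L12,L13}"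
  shows "pc c' p \<in> {L4,L5,L6,L7,L8,L9,L10,L11,L12,L13} \<and> lt (lc c' p) = lt (lc c p) \<and> fst (Hv c' p) = fst (Hv c p)"
  using assms unfolding ustep_def Let_def
  apply (cases "pc c p")
  apply (simp_all split: prod.splits ptr.splits aop.splits)
  apply auto
  done

lemma step_G:
  assumes "ustep \<delta> q c c'" "fst (Hv c p) < Cv c" "pc c p = L3 \<longrightarrow> lt (lc c p) < Cv c"
  shows "fst (Hv c' p) < Cv c' \<and> (pc c' p = L3 \<longrightarrow> lt (lc c' p) < Cv c')"
proof (cases "q = p")
  case False
  then show ?thesis using step_other[OF assms(1) False] assms(2,3) by auto
next
  case True
  then show ?thesis using assms unfolding ustep_def Let_def
    apply (cases "pc c p")
    apply (simp_all split: prod.splits ptr.splits aop.splits)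
    apply auto
    done
qed
lemma exec_step: "is_exec \<delta> s0 E sched \<Longrightarrow> E (Suc S) = E S \<or> (\<exists>q. ustep \<delta> q (E S) (E (Suc S)))"
  unfolding is_exec_def
  apply (erule conjE)
  apply (drule spec[of _ S])
  apply (cases "sched S")
   apply simp_all
  apply blast
  done

lemma cA:
  assumes "c' = c \<or> ustep \<delta> q c c'" "pc c p = L3" "lt (lc c p) = v" "fst (Hv c p) < v"
  shows "(pc c' p = L3 \<and> lt (lc c' p) = v \<and> fst (Hv c' p) < v) \<or>
         (pc c' p \<in> {L4,L5,L6,L7,L8,L9,L10,L11,L12,L13} \<and> lt (lc c' p) = v \<and> fst (Hv c' p) = v)"
proof -
  { assume u: "ustep \<delta> q c c'"
    have ?thesis
    proof (cases "q = p")
      case True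
      then show ?thesis using step_L3[of \<delta> p c c'] u assms(2-4) by auto
    next
      case False
      then show ?thesis using step_other[OF u False] assms(2-4) by auto
    qed }
  then show ?thesis using assms by auto
qed

lemma cB:
  assumes "c' = c \<or> ustep \<delta> q c c'" "pc c p \<in> {L4,L5,L6,L7,L8,L9,L10,L11,L12,L13}" "lt (lc c p) = v" "fst (Hv c p) = v"
  shows "(pc c' p \<in> {L4,L5,L6,L7,L8,L9,L10,L11,L12,L13} \<and> lt (lc c' p) = v \<and> fst (Hv c' p) = v)
         \<or> (\<exists>r. Hv c p = (v, r) \<and> r \<noteq> Null)"
proof -
  { assume u: "ustep \<delta> q c c'"
    have ?thesis
    proof (cases "q = p")
      case True
      show ?thesis
      proof (cases "pc c p = L4")
        case True
        then show ?thesis using step_L4[of \<delta> p c c'] u \<open>q = p\<close> assms(3,4)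
          by (cases "Hv c p") auto
      next
        case False
        then have "pc c p \<in> {L5,L6,L7,L8,L9,L10,L11,L12,L13}" using assms(2) by auto
        then show ?thesis using step_mid[of \<delta> p c c'] u \<open>q = p\<close> assms(3,4) by auto
      qed
    next
      case False
      then show ?thesis using step_other[OF u False] assms(2-4) by auto
    qed }
  then show ?thesis using assms by auto
qed

lemma G_inv:
  assumes "is_exec \<delta> s0 E sched"
  shows "fst (Hv (E S) p) < Cv (E S) \<and> (pc (E S) p = L3 \<longrightarrow> lt (lc (E S) p) < Cv (E S))"
proof (induction S)
  case 0
  then show ?case using assms by (simp add: is_exec_def init_def)
next
  case (Suc S)
  then show ?case using exec_step[OF assms, of S] step_G by metis
qed

lemma Cv_mono:
  assumes "is_exec \<delta> s0 E sched" "S \<le> S'"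
  shows "Cv (E S) \<le> Cv (E S')"
  using assms(2)
proof (induction rule: dec_induct)
  case base then show ?case by simp
next
  case (step n)
  then show ?case using exec_step[OF assms(1), of n] step_cv by (metis order_trans order_refl)
qed

lemma invAB:
  assumes "is_exec \<delta> s0 E sched" "S0 \<le> S"
    and "pc (E S0) p = L3" "lt (lc (E S0) p) = v" "fst (Hv (E S0) p) < v"
  shows "(pc (E S) p = L3 \<and> lt (lc (E S) p) = v \<and> fst (Hv (E S) p) < v) \<or>
         (pc (E S) p \<in> {L4,L5,L6,L7,L8,L9,L10,L11,L12,L13} \<and> lt (lc (E S) p) = v \<and> fst (Hv (E S) p) = v)
         \<or> (\<exists>S'\<le>S. \<exists>r. Hv (E S') p = (v, r) \<and> r \<noteq> Null)"
  using assms(2)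
proof (induction rule: dec_induct)
  case base then show ?case using assms by auto
next
  case (step n)
  from exec_step[OF assms(1), of n] obtain q where st: "E (Suc n) = E n \<or> ustep \<delta> q (E n) (E (Suc n))"
    by blast
  from step.IH show ?case
  proof (elim disjE conjE exE)
    assume "pc (E n) p = L3" "lt (lc (E n) p) = v" "fst (Hv (E n) p) < v"
    then show ?thesis using cA[OF st] by blast
  next
    assume "pc (E n) p \<in> {L4,L5,L6,L7,L8,L9,L10,L11,L12,L13}" "lt (lc (E n) p) = v" "fst (Hv (E n) p) = v"
    then show ?thesis using cB[OF st] by (metis le_refl le_SucI)
  next
    fix S' r assume "S' \<le> n" "Hv (E S') p = (v, r)" "r \<noteq> Null"
    then show ?thesis using le_SucI by blast
  qed
qed

lemma invB:
  assumes "is_exec \<delta> s0 E sched" "S0 \<le> S"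
    and "(pc (E S0) p \<in> {L4,L5,L6,L7,L8,L9,L10,L11,L12,L13} \<and> lt (lc (E S0) p) = v \<and> fst (Hv (E S0) p) = v)
         \<or> (\<exists>S'\<le>S0. \<exists>r. Hv (E S') p = (v, r) \<and> r \<noteq> Null)"
  shows "(pc (E S) p \<in> {L4,L5,L6,L7,L8,L9,L10,L11,L12,L13} \<and> lt (lc (E S) p) = v \<and> fst (Hv (E S) p) = v)
         \<or> (\<exists>S'\<le>S. \<exists>r. Hv (E S') p = (v, r) \<and> r \<noteq> Null)"
  using assms(2)
proof (induction rule: dec_induct)
  case base then show ?case using assms by auto
next
  case (step n)
  from exec_step[OF assms(1), of n] obtain q where st: "E (Suc n) = E n \<or> ustep \<delta> q (E n) (E (Suc n))"
    by blast
  from step.IH show ?case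
  proof (elim disjE conjE exE)
    assume "pc (E n) p \<in> {L4,L5,L6,L7,L8,L9,L10,L11,L12,L13}" "lt (lc (E n) p) = v" "fst (Hv (E n) p) = v"
    then show ?thesis using cB[OF st] by (metis le_refl le_SucI)
  next
    fix S' r assume "S' \<le> n" "Hv (E S') p = (v, r)" "r \<noteq> Null"
    then show ?thesis using le_SucI by blast
  qed
qed

theorem mainTheorem5:
  fixes \<delta> :: "('s \<times> 'op \<times> 's \<times> 'r) set" and s0 :: 's
    and E :: "nat \<Rightarrow> ('p,'op,'s,'r) conf" and sched :: "nat \<Rightarrow> 'p option"
    and p :: 'p and k :: nat and v :: nat
    and T T' t :: nat and x y :: "'r resp"
  assumes "is_exec \<delta> s0 E sched"
    and "tOp E sched p k v"
    and "Hv (E T) p = (v, x)"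
    and "Hv (E T') p = (t, y)"
    and "t \<noteq> v"
    and "T < T'"
  shows "\<exists>Ts < T'. done_at E sched p k Ts"
proof -
  note ex = assms(1)
  from assms(2) obtain T0 where T0: "sched T0 = Some p" "pc (E T0) p = L2" "Cv (E T0) = v"
    unfolding tOp_def by blast
  have us: "ustep \<delta> p (E T0) (E (Suc T0))" using ex T0(1) unfolding is_exec_def
    by (metis option.simps(5))
  have s1: "pc (E (Suc T0)) p = L3" "lt (lc (E (Suc T0)) p) = v" "Hv (E (Suc T0)) p = Hv (E T0) p"
    using step_L2[OF us T0(2)] T0(3) by auto
  have f1: "fst (Hv (E (Suc T0)) p) < v" using s1(3) G_inv[OF ex, of T0 p] T0(3) by simp
  have "T0 < T"
  proof (rule ccontr)
    assume "\<not> T0 < T"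
    then have "Cv (E T) \<le> v" using Cv_mono[OF ex, of T T0] T0(3) by simp
    then show False using G_inv[OF ex, of T p] assms(3) by simp
  qed
  then have "Suc T0 \<le> T" by simp
  from invAB[OF ex this s1(1,2) f1] assms(3)
  have "(pc (E T) p \<in> {L4,L5,L6,L7,L8,L9,L10,L11,L12,L13} \<and> lt (lc (E T) p) = v \<and> fst (Hv (E T) p) = v)
         \<or> (\<exists>S'\<le>T. \<exists>r. Hv (E S') p = (v, r) \<and> r \<noteq> Null)" by auto
  from invB[OF ex _ this, of T'] assms(4,5,6)
  obtain S' r where S': "S' \<le> T'" "Hv (E S') p = (v, r)" "r \<noteq> Null" by auto
  have "S' < T'" using S' assms(4,5) by (metis le_neq_implies_less prod.inject)
  moreover have "done_at E sched p k S'" unfolding done_at_def using assms(2) S' by blast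
  ultimately show ?thesis by blast
qed

end
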